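(* Let $N=\{1,\ldots,n\}$, let $\mathscr{B}_1,\ldots,\mathscr{B}_p\in\mathfrak{B}^*(n)$, let $\mathscr{F}_k=\{v\in\mathscr{BG}(n):\sum_{S\in\mathscr{B}_k}\lambda^{\mathscr{B}_k}_Sv(S)=v(N)\}$ be the facet of $\mathscr{BG}(n)$ associated with $\mathscr{B}_k$, and consider the face $\mathscr{F}=\mathscr{F}_1\cap\cdots\cap\mathscr{F}_p$. Then every game in $\mathscr{F}$ has a core reduced to a single point if and only if the rank of the family of vectors $\{\mathbf{1}^S: S\in\mathscr{B}_1\cup\cdots\cup\mathscr{B}_p\}$ is $n$.
   Context: A game on $N$ is a map $v:2^N\to\mathbb{R}$ with $v(\varnothing)=0$. $\mathbf{1}^S\in\mathbb{R}^N$ is the characteristic vector of $S$. The core is $C(v)=\{x\in\mathbb{R}^N:\sum_{i\in S}x_i\geqslant v(S)\ \forall S,\ \sum_{i\in N}x_i=v(N)\}$. A collection $\mathscr{B}$ of nonempty subsets of $N$ is balanced if there exist positive weights $(\lambda_S)_{S\in\mathscr{B}}$ with $\sum_{S\in\mathscr{B},S\ni i}\lambda_S=1$ for all $i$; minimal balanced if no proper subcollection is balanced, with unique weights $\lambda^{\mathscr{B}}_S$. $\mathfrak{B}^*(n)$ is the set of minimal balanced collections other than $\{N\}$. $\mathscr{BG}(n)=\{v:\sum_{S\in\mathscr{B}}\lambda^{\mathscr{B}}_Sv(S)\leqslant v(N)\ \forall\mathscr{B}\in\mathfrak{B}^*(n)\}$. *)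

theory Defs
  imports "HOL-Analysis.Analysis"
begin

text \<open>Players: the finite type 'n (so N = UNIV, n = CARD('n)).
  A game is v :: 'n set \<Rightarrow> real with v {} = 0.\<close>

definition is_game :: "('n::finite set \<Rightarrow> real) \<Rightarrow> bool" where
  "is_game v \<longleftrightarrow> v {} = 0"

definition char_vec :: "'n::finite set \<Rightarrow> real ^ 'n" where
  "char_vec S = (\<chi> i. if i \<in> S then 1 else 0)"

definition core :: "('n::finite set \<Rightarrow> real) \<Rightarrow> (real ^ 'n) set" where
  "core v = {x. (\<forall>S. (\<Sum>i\<in>S. x $ i) \<ge> v S) \<and> (\<Sum>i\<in>UNIV. x $ i) = v UNIV}"

definition balanced_weights :: "'n::finite set set \<Rightarrow> ('n set \<Rightarrow> real) \<Rightarrow> bool" where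
  "balanced_weights B lam \<longleftrightarrow>
     (\<forall>S\<in>B. lam S > 0) \<and> (\<forall>i. (\<Sum>S\<in>{S\<in>B. i \<in> S}. lam S) = 1)"

definition balanced :: "'n::finite set set \<Rightarrow> bool" where
  "balanced B \<longleftrightarrow> (\<forall>S\<in>B. S \<noteq> {}) \<and> (\<exists>lam. balanced_weights B lam)"

definition minimal_balanced :: "'n::finite set set \<Rightarrow> bool" where
  "minimal_balanced B \<longleftrightarrow> balanced B \<and> (\<forall>C. C \<subset> B \<longrightarrow> \<not> balanced C)"

text \<open>The (unique) balancing weights of a minimal balanced collection,
  extended by 0 outside the collection.\<close>
definition bal_weight :: "'n::finite set set \<Rightarrow> 'n set \<Rightarrow> real" where
  "bal_weight B = (THE lam. balanced_weights B lam \<and> (\<forall>S. S \<notin> B \<longrightarrow> lam S = 0))"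

definition Bstar :: "'n::finite set set set" where
  "Bstar = {B. minimal_balanced B \<and> B \<noteq> {UNIV}}"

definition BG :: "('n::finite set \<Rightarrow> real) set" where
  "BG = {v. is_game v \<and> (\<forall>B\<in>Bstar. (\<Sum>S\<in>B. bal_weight B S * v S) \<le> v UNIV)}"

definition facet :: "'n::finite set set \<Rightarrow> ('n set \<Rightarrow> real) set" where
  "facet B = {v\<in>BG. (\<Sum>S\<in>B. bal_weight B S * v S) = v UNIV}"

end

theory Submission
  imports Defs
begin

lemma move_lemma:
  fixes mu d :: "'n::finite set \<Rightarrow> real"
  assumes nn: "\<forall>S. mu S \<ge> 0" and z: "\<forall>S. mu S = 0 \<longrightarrow> d S = 0" and neg: "\<exists>S. d S < 0"
  shows "\<exists>t\<ge>0. (\<forall>S. mu S + t * d S \<ge> 0) \<and> {S. mu S + t * d S \<noteq> 0} \<subset> {S. mu S \<noteq> 0}"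
proof -
  define D where "D = {S. d S < 0}"
  have finD: "finite D" by simp
  have neD: "D \<noteq> {}" using neg D_def by auto
  define t where "t = Min ((\<lambda>S. mu S / (- d S)) ` D)"
  obtain S0 where S0: "S0 \<in> D" "t = mu S0 / (- d S0)"
  proof -
    have "t \<in> (\<lambda>S. mu S / (- d S)) ` D" unfolding t_def using finD neD by (intro Min_in) auto
    then show ?thesis using that by blast
  qed
  have tle: "t \<le> mu S / (- d S)" if "S \<in> D" for S
    using that t_def finD by auto
  have t0: "t \<ge> 0" using S0 nn D_def by (auto simp: divide_nonneg_neg)
  have pos: "mu S + t * d S \<ge> 0" for S
  proof (cases "d S < 0")
    case True
    have "t \<le> mu S / (- d S)" using tle[of S] D_def True by simp
    moreover have "- d S > 0" using True by simp
    ultimately have "t * (- d S) \<le> mu S" by (simp only: pos_le_divide_eq)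
    then show ?thesis by simp
  next
    case False then show ?thesis using t0 nn by (simp add: not_less)
  qed
  have sub: "{S. mu S + t * d S \<noteq> 0} \<subseteq> {S. mu S \<noteq> 0}" using z by auto
  have "mu S0 + t * d S0 = 0" using S0 D_def by (simp add: field_simps)
  moreover have "mu S0 \<noteq> 0" using S0 D_def z by auto
  ultimately have "{S. mu S + t * d S \<noteq> 0} \<noteq> {S. mu S \<noteq> 0}" by blast
  with sub t0 pos show ?thesis by blast
qed

lemma sum_restrict:
  fixes l :: "'n::finite set \<Rightarrow> real"
  assumes "\<forall>S. S \<notin> B \<longrightarrow> l S = 0"
  shows "sum l {S\<in>B. i \<in> S} = sum l {S. i \<in> S}"
  by (rule sum.mono_neutral_left) (use assms in auto)

lemma supp_balanced:
  fixes w :: "'n::finite set \<Rightarrow> real"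
  assumes nn: "\<forall>S. w S \<ge> 0" and e: "w {} = 0" and s: "\<forall>i. sum w {S. i \<in> S} = 1"
  shows "balanced {S. w S \<noteq> 0} \<and> balanced_weights {S. w S \<noteq> 0} w"
proof -
  have bw: "balanced_weights {S. w S \<noteq> 0} w"
    unfolding balanced_weights_def
  proof (intro conjI allI ballI)
    fix S assume "S \<in> {S. w S \<noteq> 0}" then show "w S > 0" using nn[rule_format, of S] by auto
  next
    fix i show "sum w {S \<in> {S. w S \<noteq> 0}. i \<in> S} = 1"
      using sum_restrict[of "{S. w S \<noteq> 0}" w i] s by auto
  qed
  then show ?thesis unfolding balanced_def using e by auto
qed

lemma weights_unique:
  fixes B :: "'n::finite set set"
  assumes mb: "minimal_balanced B"
    and b1: "balanced_weights B l1" and z1: "\<forall>S. S \<notin> B \<longrightarrow> l1 S = 0"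
    and b2: "balanced_weights B l2" and z2: "\<forall>S. S \<notin> B \<longrightarrow> l2 S = 0"
  shows "l1 = l2"
proof (rule ccontr)
  assume ne: "l1 \<noteq> l2"
  have bal: "balanced B" and mn: "\<forall>C. C \<subset> B \<longrightarrow> \<not> balanced C" using mb minimal_balanced_def by auto
  have Bne: "\<forall>S\<in>B. S \<noteq> {}" using bal balanced_def by auto
  have p1: "\<forall>S\<in>B. l1 S > 0" and s1: "\<forall>i. sum l1 {S. i \<in> S} = 1"
    using b1 z1 sum_restrict[of B l1] unfolding balanced_weights_def by auto
  have p2: "\<forall>S\<in>B. l2 S > 0" and s2: "\<forall>i. sum l2 {S. i \<in> S} = 1"
    using b2 z2 sum_restrict[of B l2] unfolding balanced_weights_def by auto
  have supp1: "{S. l1 S \<noteq> 0} = B"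
  proof
    show "{S. l1 S \<noteq> 0} \<subseteq> B" using z1 by blast
    show "B \<subseteq> {S. l1 S \<noteq> 0}" using p1 by fastforce
  qed
  define d where "d S = l2 S - l1 S" for S
  have sd: "sum d {S. i \<in> S} = 0" for i using s1 s2 by (simp add: d_def sum_subtractf)
  show False
  proof (cases "\<exists>S. d S < 0")
    case True
    have nn1: "\<forall>S. l1 S \<ge> 0"
    proof
      fix S show "l1 S \<ge> 0" using p1[rule_format, of S] z1[rule_format, of S] by (cases "S \<in> B") auto
    qed
    have zz: "\<forall>S. l1 S = 0 \<longrightarrow> d S = 0"
    proof (intro allI impI)
      fix S assume "l1 S = 0"
      then have "S \<notin> B" using p1 by fastforce
      then show "d S = 0" using z1 z2 d_def by simp
    qed
    obtain t where t: "t \<ge> 0" "\<forall>S. l1 S + t * d S \<ge> 0"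
      "{S. l1 S + t * d S \<noteq> 0} \<subset> {S. l1 S \<noteq> 0}"
      using move_lemma[OF nn1 zz True] by blast
    define w where "w S = l1 S + t * d S" for S
    have "{} \<notin> B" using Bne by blast
    then have "w {} = 0" using z1 z2 unfolding w_def d_def by simp
    moreover have "sum w {S. i \<in> S} = 1" for i
      using s1 sd by (simp add: w_def sum.distrib sum_distrib_left[symmetric])
    ultimately have "balanced {S. w S \<noteq> 0}" using supp_balanced[of w] t(2) w_def by auto
    moreover have "{S. w S \<noteq> 0} \<subset> B" using t(3) supp1 w_def by auto
    ultimately show False using mn by blast
  next
    case False
    have "d S = 0" for S
    proof (cases "S \<in> B")
      case True
      then obtain i where i: "i \<in> S" using Bne by auto
      have nnd: "\<forall>S'\<in>{S. i \<in> S}. 0 \<le> d S'" using False by (simp add: not_less)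
      have "\<forall>S'\<in>{S. i \<in> S}. d S' = 0"
        using sum_nonneg_eq_0_iff[OF finite, of "{S. i \<in> S}" d] nnd sd[of i] by blast
      then show ?thesis using i by auto
    next
      case False then show ?thesis using z1 z2 d_def by auto
    qed
    then have "l1 = l2" using d_def by (auto simp: fun_eq_iff)
    then show False using ne by simp
  qed
qed

lemma bal_weight_props:
  assumes "minimal_balanced B"
  shows "balanced_weights B (bal_weight B) \<and> (\<forall>S. S \<notin> B \<longrightarrow> bal_weight B S = 0)"
proof -
  have "balanced B" using assms unfolding minimal_balanced_def by blast
  then obtain lam where lam: "balanced_weights B lam" unfolding balanced_def by blast
  define l where "l S = (if S \<in> B then lam S else 0)" for S
  have "balanced_weights B l" using lam unfolding balanced_weights_def l_def
    by (auto simp: sum_restrict)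
  then have ex: "balanced_weights B l \<and> (\<forall>S. S \<notin> B \<longrightarrow> l S = 0)" using l_def by auto
  show ?thesis unfolding bal_weight_def
    by (rule theI[of _ l]) (use ex weights_unique[OF assms] in blast)+
qed

lemma bal_weight_eq:
  assumes "minimal_balanced B" "balanced_weights B l" "\<forall>S. S \<notin> B \<longrightarrow> l S = 0"
  shows "bal_weight B = l"
  using weights_unique[OF assms(1) _ _ assms(2,3)] bal_weight_props[OF assms(1)] by metis


lemma reduction:
  fixes v :: "'n::finite set \<Rightarrow> real" and c :: real
  shows "\<forall>mu. (\<forall>S. mu S \<ge> 0) \<longrightarrow> mu {} = 0 \<longrightarrow> (\<forall>i. sum mu {S. i \<in> S} = 1)
     \<longrightarrow> card {S. mu S \<noteq> 0} = m \<longrightarrow> (\<Sum>S\<in>UNIV. mu S * v S) > c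
     \<longrightarrow> (\<exists>B. minimal_balanced B \<and> (\<Sum>S\<in>B. bal_weight B S * v S) > c)"
proof (induction m rule: less_induct)
  case (less m)
  show ?case
  proof (intro allI impI)
    fix mu :: "'n set \<Rightarrow> real"
    assume nn: "\<forall>S. mu S \<ge> 0" and e: "mu {} = 0" and s: "\<forall>i. sum mu {S. i \<in> S} = 1"
      and cm: "card {S. mu S \<noteq> 0} = m" and obj: "(\<Sum>S\<in>UNIV. mu S * v S) > c"
    define B where "B = {S. mu S \<noteq> 0}"
    have bB: "balanced B" and bwB: "balanced_weights B mu" using supp_balanced[OF nn e s] B_def by auto
    have zB: "\<forall>S. S \<notin> B \<longrightarrow> mu S = 0" using B_def by auto
    have objB: "(\<Sum>S\<in>UNIV. mu S * v S) = (\<Sum>S\<in>B. mu S * v S)"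
      by (rule sum.mono_neutral_right) (auto simp: B_def)
    show "\<exists>B. minimal_balanced B \<and> (\<Sum>S\<in>B. bal_weight B S * v S) > c"
    proof (cases "minimal_balanced B")
      case True
      then have "bal_weight B = mu" using bal_weight_eq bwB zB by blast
      then show ?thesis using True obj objB by auto
    next
      case False
      then obtain C where CB: "C \<subset> B" and bC: "balanced C" using bB minimal_balanced_def by auto
      obtain nu where nu: "balanced_weights C nu" using bC balanced_def by auto
      define nu' where "nu' S = (if S \<in> C then nu S else 0)" for S
      have nn': "\<forall>S. nu' S \<ge> 0" using nu unfolding nu'_def balanced_weights_def
        by (auto simp: less_imp_le)
      have e': "nu' {} = 0" using bC unfolding balanced_def nu'_def by auto
      have s': "\<forall>i. sum nu' {S. i \<in> S} = 1"
      proof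
        fix i
        have "sum nu' {S\<in>C. i \<in> S} = sum nu' {S. i \<in> S}"
          by (rule sum_restrict) (simp add: nu'_def)
        moreover have "sum nu' {S\<in>C. i \<in> S} = sum nu {S\<in>C. i \<in> S}"
          by (rule sum.cong) (auto simp: nu'_def)
        ultimately show "sum nu' {S. i \<in> S} = 1" using nu unfolding balanced_weights_def by simp
      qed
      have suppC: "{S. nu' S \<noteq> 0} = C"
      proof
        show "{S. nu' S \<noteq> 0} \<subseteq> C" by (auto simp: nu'_def split: if_splits)
        show "C \<subseteq> {S. nu' S \<noteq> 0}" using nu unfolding balanced_weights_def nu'_def by fastforce
      qed
      have cardlt: "card C < m" using CB cm B_def psubset_card_mono[OF finite, of C B] by simp
      show ?thesis
      proof (cases "(\<Sum>S\<in>UNIV. nu' S * v S) > c")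
        case True
        then show ?thesis using less.IH[OF cardlt] nn' e' s' suppC by blast
      next
        case False
        define d where "d S = mu S - nu' S" for S
        have zd: "\<forall>S. mu S = 0 \<longrightarrow> d S = 0"
        proof (intro allI impI)
          fix S assume "mu S = 0"
          then have "S \<notin> C" using CB B_def by auto
          then show "d S = 0" using \<open>mu S = 0\<close> by (simp add: d_def nu'_def)
        qed
        have neg: "\<exists>S. d S < 0"
        proof (rule ccontr)
          assume "\<not> (\<exists>S. d S < 0)"
          then have nnd: "\<forall>S. 0 \<le> d S" by (simp add: not_less)
          obtain S0 where S0: "S0 \<in> B" "S0 \<notin> C" using CB by blast
          then have "S0 \<noteq> {}" using e B_def by auto
          then obtain i where i: "i \<in> S0" by blast
          have sd: "sum d {S. i \<in> S} = 0" using s s' by (simp add: d_def sum_subtractf)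
          have "\<forall>S'\<in>{S. i \<in> S}. d S' = 0"
            using sum_nonneg_eq_0_iff[OF finite, of "{S. i \<in> S}" d] nnd sd by blast
          then have "d S0 = 0" using i by blast
          then show False using S0 B_def by (simp add: d_def nu'_def)
        qed
        obtain t where t: "t \<ge> 0" "\<forall>S. mu S + t * d S \<ge> 0"
          "{S. mu S + t * d S \<noteq> 0} \<subset> {S. mu S \<noteq> 0}"
          using move_lemma[OF nn zd neg] by blast
        define w where "w S = mu S + t * d S" for S
        have nnw: "\<forall>S. w S \<ge> 0" using t(2) w_def by simp
        have ew: "w {} = 0" using e e' by (simp add: w_def d_def)
        have sw: "\<forall>i. sum w {S. i \<in> S} = 1"
          using s s' by (simp add: w_def d_def sum.distrib sum_subtractf sum_distrib_left[symmetric])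
        have cw: "card {S. w S \<noteq> 0} < m"
          using psubset_card_mono[OF finite t(3)] cm by (simp add: w_def)
        have objw: "(\<Sum>S\<in>UNIV. w S * v S) = (\<Sum>S\<in>UNIV. mu S * v S)
            + t * ((\<Sum>S\<in>UNIV. mu S * v S) - (\<Sum>S\<in>UNIV. nu' S * v S))"
          by (simp add: w_def d_def algebra_simps sum.distrib sum_subtractf sum_distrib_left)
        have "t * ((\<Sum>S\<in>UNIV. mu S * v S) - (\<Sum>S\<in>UNIV. nu' S * v S)) \<ge> 0"
          using t(1) obj False by simp
        then have "(\<Sum>S\<in>UNIV. w S * v S) > c" using objw obj by linarith
        then show ?thesis using less.IH[OF cw] nnw ew sw by blast
      qed
    qed
  qed
qed


lemma charvec_inner: "x \<bullet> char_vec S = (\<Sum>i\<in>S. x $ i)"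
proof -
  have "x \<bullet> char_vec S = (\<Sum>i\<in>UNIV. if i \<in> S then x $ i else 0)"
    by (simp add: inner_vec_def char_vec_def if_distrib cong: if_cong)
  also have "\<dots> = (\<Sum>i\<in>S. x $ i)" by (simp add: sum.If_cases)
  finally show ?thesis .
qed

lemma charvec_sum_component:
  fixes y :: "'n::finite set \<Rightarrow> real"
  shows "(\<Sum>S\<in>UNIV. y S *\<^sub>R char_vec S) $ i = sum y {S. i \<in> S}"
proof -
  have "(\<Sum>S\<in>UNIV. y S *\<^sub>R char_vec S) $ i = (\<Sum>S\<in>UNIV. if i \<in> S then y S else 0)"
    by (auto simp: char_vec_def intro!: sum.cong)
  also have "\<dots> = sum y {S. i \<in> S}" by (simp add: sum.If_cases)
  finally show ?thesis .
qed

lemma sum_in_cc_hull: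
  assumes "finite I" "\<forall>j\<in>I. f j \<in> convex_cone hull A"
  shows "sum f I \<in> convex_cone hull A"
  using assms by (induction I rule: finite_induct)
    (auto simp: convex_cone_hull_contains_0 convex_cone_hull_add)

lemma bal_weight_univ: "(\<Sum>S\<in>{UNIV}. bal_weight {UNIV::'n::finite set} S * v S) = v UNIV"
proof -
  have mb: "minimal_balanced {UNIV::'n set}"
    unfolding minimal_balanced_def
  proof
    have "{S\<in>{UNIV::'n set}. i \<in> S} = {UNIV}" for i by auto
    then have "balanced_weights {UNIV::'n set} (\<lambda>S. 1)"
      unfolding balanced_weights_def by simp
    then show "balanced {UNIV::'n set}" unfolding balanced_def by auto
    show "\<forall>C. C \<subset> {UNIV::'n set} \<longrightarrow> \<not> balanced C"
    proof (intro allI impI)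
      fix C :: "'n set set" assume "C \<subset> {UNIV}"
      then have "C = {}" by auto
      then show "\<not> balanced C" unfolding balanced_def balanced_weights_def by auto
    qed
  qed
  have "balanced_weights {UNIV::'n set} (bal_weight {UNIV})" using bal_weight_props[OF mb] by blast
  then have "sum (bal_weight {UNIV}) {S\<in>{UNIV::'n set}. undefined \<in> S} = 1"
    unfolding balanced_weights_def by blast
  moreover have "{S\<in>{UNIV::'n set}. undefined \<in> S} = {UNIV}" by auto
  ultimately have "bal_weight {UNIV::'n set} UNIV = 1" by simp
  then show ?thesis by simp
qed

lemma BG_core_nonempty:
  fixes v :: "'n::finite set \<Rightarrow> real"
  assumes vBG: "v \<in> BG"
  shows "\<exists>x. x \<in> core v"
proof -
  have v0: "v {} = 0" using vBG unfolding BG_def is_game_def by blast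
  have ineq: "\<forall>B\<in>Bstar. (\<Sum>S\<in>B. bal_weight B S * v S) \<le> v UNIV" using vBG unfolding BG_def by blast
  define g where "g S = (char_vec S, v S)" for S
  define h where "h = (- char_vec (UNIV::'n set), - v UNIV)"
  define K where "K = {(\<Sum>S\<in>UNIV. y S *\<^sub>R g S) + t *\<^sub>R h | y t. (\<forall>S. y S \<ge> 0) \<and> t \<ge> (0::real)}"
  define A where "A = range g \<union> {h}"
  have K_cc: "convex_cone K"
    unfolding convex_cone_iff
  proof (intro conjI ballI allI impI)
    show "0 \<in> K" unfolding K_def by (rule CollectI, rule exI[of _ "\<lambda>S. 0"], rule exI[of _ 0]) simp
  next
    fix x z assume "x \<in> K" "z \<in> K"
    then obtain y1 t1 y2 t2 where x: "x = (\<Sum>S\<in>UNIV. y1 S *\<^sub>R g S) + t1 *\<^sub>R h" "\<forall>S. y1 S \<ge> 0" "t1 \<ge> 0"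
      and z: "z = (\<Sum>S\<in>UNIV. y2 S *\<^sub>R g S) + t2 *\<^sub>R h" "\<forall>S. y2 S \<ge> 0" "t2 \<ge> 0"
      unfolding K_def by blast
    have e1: "x + z = (\<Sum>S\<in>UNIV. (y1 S + y2 S) *\<^sub>R g S) + (t1 + t2) *\<^sub>R h"
      using x z by (simp add: scaleR_add_left sum.distrib algebra_simps)
    have e2: "\<forall>S. y1 S + y2 S \<ge> 0" "t1 + t2 \<ge> 0" using x z by (auto intro: add_nonneg_nonneg)
    show "x + z \<in> K" unfolding K_def
      by (intro CollectI exI[where x="\<lambda>S. y1 S + y2 S"] exI[where x="t1 + t2"]) (use e1 e2 in simp)
  next
    fix x and c :: real assume "x \<in> K" "c \<ge> 0"
    then obtain y1 t1 where x: "x = (\<Sum>S\<in>UNIV. y1 S *\<^sub>R g S) + t1 *\<^sub>R h" "\<forall>S. y1 S \<ge> 0" "t1 \<ge> 0"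
      unfolding K_def by blast
    have e1: "c *\<^sub>R x = (\<Sum>S\<in>UNIV. (c * y1 S) *\<^sub>R g S) + (c * t1) *\<^sub>R h"
      using x by (simp add: scaleR_right_distrib scaleR_sum_right)
    have e2: "\<forall>S. c * y1 S \<ge> 0" "c * t1 \<ge> 0" using x \<open>c \<ge> 0\<close> by auto
    show "c *\<^sub>R x \<in> K" unfolding K_def
      by (intro CollectI exI[where x="\<lambda>S. c * y1 S"] exI[where x="c * t1"]) (use e1 e2 in simp)
  qed
  have gK: "g S0 \<in> K" for S0
  proof -
    have "(\<Sum>S\<in>UNIV. (if S = S0 then 1 else 0) *\<^sub>R g S) + 0 *\<^sub>R h = g S0"
    proof -
      have "(\<lambda>S. (if S = S0 then 1 else 0) *\<^sub>R g S) = (\<lambda>S. if S = S0 then g S else 0)"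
        by auto
      then show ?thesis by (simp only: sum.delta' finite, simp)
    qed
    then show ?thesis unfolding K_def
      by (intro CollectI exI[of _ "\<lambda>S. if S = S0 then 1 else 0"] exI[of _ 0]) auto
  qed
  have hK: "h \<in> K"
    unfolding K_def by (intro CollectI exI[of _ "\<lambda>S. 0"] exI[of _ 1]) auto
  have KA: "K = convex_cone hull A"
  proof
    show "convex_cone hull A \<subseteq> K"
      by (rule hull_minimal) (use gK hK K_cc A_def in auto)
    show "K \<subseteq> convex_cone hull A"
    proof
      fix x assume "x \<in> K"
      then obtain y1 t1 where x: "x = (\<Sum>S\<in>UNIV. y1 S *\<^sub>R g S) + t1 *\<^sub>R h" "\<forall>S. y1 S \<ge> 0" "t1 \<ge> 0"
        unfolding K_def by blast
      have "(\<Sum>S\<in>UNIV. y1 S *\<^sub>R g S) \<in> convex_cone hull A"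
      proof (rule sum_in_cc_hull)
        show "\<forall>j\<in>UNIV. y1 j *\<^sub>R g j \<in> convex_cone hull A"
        proof
          fix j
          have "g j \<in> A" by (simp add: A_def)
          then show "y1 j *\<^sub>R g j \<in> convex_cone hull A"
            using convex_cone_hull_mul[OF hull_inc, of "g j" A "y1 j"] x(2) by blast
        qed
      qed simp
      moreover have "t1 *\<^sub>R h \<in> convex_cone hull A"
        using convex_cone_hull_mul[OF hull_inc, of h A t1] x(3) by (simp add: A_def)
      ultimately show "x \<in> convex_cone hull A" using x(1) convex_cone_hull_add by auto
    qed
  qed
  have closedK: "closed K" unfolding KA A_def by (rule closed_convex_cone_hull) simp
  have convK: "convex K" using K_cc unfolding convex_cone_def by blast
  show ?thesis
  proof (cases "((0::real^'n), (1::real)) \<in> K")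
    case False
    obtain a b where ab: "inner a ((0::real^'n), (1::real)) < b" "\<forall>x\<in>K. inner a x > b"
      using separating_hyperplane_closed_point[OF convK closedK False] by blast
    obtain w \<alpha> where a: "a = (w, \<alpha>)" by (cases a)
    have "0 \<in> K" using K_cc unfolding convex_cone_iff by blast
    then have "inner a 0 > b" using ab(2) by blast
    then have b0: "b < 0" by simp
    have nonneg: "inner a k \<ge> 0" if "k \<in> K" for k
    proof (rule ccontr)
      assume "\<not> inner a k \<ge> 0"
      then have neg: "inner a k < 0" by simp
      define c where "c = (b - 1) / inner a k"
      have c0: "c \<ge> 0" using neg b0 by (simp add: c_def divide_nonpos_neg)
      have "c *\<^sub>R k \<in> K" using convex_cone_scaleR[OF K_cc c0 that] .
      then have "inner a (c *\<^sub>R k) > b" using ab(2) by blast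
      moreover have "inner a (c *\<^sub>R k) = b - 1" using neg by (simp add: c_def)
      ultimately show False by simp
    qed
    have al: "\<alpha> < 0" using ab(1) b0 a by simp
    have gS: "w \<bullet> char_vec S + \<alpha> * v S \<ge> 0" for S using nonneg[OF gK[of S]] a g_def by simp
    have hS: "- (w \<bullet> char_vec UNIV) - \<alpha> * v UNIV \<ge> 0" using nonneg[OF hK] a h_def by simp
    define \<beta> where "\<beta> = - \<alpha>"
    have be: "\<beta> > 0" using al \<beta>_def by simp
    define x where "x = (1 / \<beta>) *\<^sub>R w"
    have xS: "x \<bullet> char_vec S = (w \<bullet> char_vec S) / \<beta>" for S by (simp add: x_def)
    have ge: "(\<Sum>i\<in>S. x $ i) \<ge> v S" for S
    proof -
      have "\<beta> * v S \<le> w \<bullet> char_vec S" using gS[of S] \<beta>_def by simp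
      then have "v S \<le> (w \<bullet> char_vec S) / \<beta>" using be by (simp add: pos_le_divide_eq mult.commute)
      then show ?thesis using xS[of S] charvec_inner[of x S] by simp
    qed
    have le: "(\<Sum>i\<in>UNIV. x $ i) \<le> v UNIV"
    proof -
      have "w \<bullet> char_vec UNIV \<le> \<beta> * v UNIV" using hS \<beta>_def by simp
      then have "(w \<bullet> char_vec UNIV) / \<beta> \<le> v UNIV" using be by (simp add: pos_divide_le_eq mult.commute)
      then show ?thesis using xS[of UNIV] charvec_inner[of x UNIV] by simp
    qed
    have "x \<in> core v" unfolding core_def using ge le ge[of UNIV] by (auto intro: antisym)
    then show ?thesis by blast
  next
    case True
    then obtain y t where yt: "((0::real^'n), (1::real)) = (\<Sum>S\<in>UNIV. y S *\<^sub>R g S) + t *\<^sub>R h"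
      "\<forall>S. y S \<ge> 0" "t \<ge> 0" unfolding K_def by blast
    have fstp: "(0::real^'n) = (\<Sum>S\<in>UNIV. y S *\<^sub>R char_vec S) - t *\<^sub>R char_vec UNIV"
      using arg_cong[OF yt(1), of fst] by (simp add: fst_sum g_def h_def)
    have sndp: "(1::real) = (\<Sum>S\<in>UNIV. y S * v S) - t * v UNIV"
      using arg_cong[OF yt(1), of snd] by (simp add: snd_sum g_def h_def)
    have cs: "sum y {S. i \<in> S} = t" for i
    proof -
      have "((\<Sum>S\<in>UNIV. y S *\<^sub>R char_vec S) - t *\<^sub>R char_vec UNIV) $ i = 0"
        using fstp by (metis zero_index)
      then have "(\<Sum>S\<in>UNIV. y S *\<^sub>R char_vec S) $ i - (t *\<^sub>R char_vec UNIV) $ i = 0"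
        by (simp only: vector_minus_component)
      then have "sum y {S. i \<in> S} - (t *\<^sub>R char_vec UNIV) $ i = 0"
        unfolding charvec_sum_component .
      then show ?thesis by (simp add: char_vec_def)
    qed
    show ?thesis
    proof (cases "t = 0")
      case True
      have "y S * v S = 0" for S
      proof (cases "S = {}")
        case True then show ?thesis using v0 by simp
      next
        case False
        then obtain i where i: "i \<in> S" by blast
        have nnd: "\<forall>S'\<in>{S. i \<in> S}. 0 \<le> y S'" using yt(2) by simp
        have "\<forall>S'\<in>{S. i \<in> S}. y S' = 0"
          using sum_nonneg_eq_0_iff[OF finite, of "{S. i \<in> S}" y] nnd cs[of i] \<open>t = 0\<close> by blast
        then show ?thesis using i by simp
      qed
      then have "(\<Sum>S\<in>UNIV. y S * v S) = 0" by (simp only: sum.neutral_const)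
      then show ?thesis using sndp True by simp
    next
      case False
      then have tp: "t > 0" using yt(3) by simp
      define mu where "mu S = (if S = {} then 0 else y S / t)" for S
      have nnmu: "\<forall>S. mu S \<ge> 0" using yt(2) tp by (simp add: mu_def)
      have emu: "mu {} = 0" by (simp add: mu_def)
      have smu: "\<forall>i. sum mu {S. i \<in> S} = 1"
      proof
        fix i
        have "sum mu {S. i \<in> S} = sum (\<lambda>S. y S / t) {S. i \<in> S}"
          by (rule sum.cong) (auto simp: mu_def)
        also have "\<dots> = sum y {S. i \<in> S} / t" by (simp add: sum_divide_distrib)
        finally show "sum mu {S. i \<in> S} = 1" using cs[of i] tp by simp
      qed
      have "(\<Sum>S\<in>UNIV. mu S * v S) = (\<Sum>S\<in>UNIV. y S * v S / t)"
        by (rule sum.cong) (auto simp: mu_def v0)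
      also have "\<dots> = (\<Sum>S\<in>UNIV. y S * v S) / t" by (simp add: sum_divide_distrib)
      also have "\<dots> = (1 + t * v UNIV) / t" using sndp by simp
      also have "\<dots> = 1 / t + v UNIV" using tp by (simp add: field_simps)
      finally have "(\<Sum>S\<in>UNIV. mu S * v S) > v UNIV" using tp by simp
      then obtain B where B: "minimal_balanced B" "(\<Sum>S\<in>B. bal_weight B S * v S) > v UNIV"
        using reduction[where v=v and c="v UNIV" and m="card {S. mu S \<noteq> 0}"] nnmu emu smu by blast
      show ?thesis
      proof (cases "B = {UNIV}")
        case True
        have "(\<Sum>S\<in>B. bal_weight B S * v S) = v UNIV" unfolding True by (rule bal_weight_univ)
        then show ?thesis using B(2) by linarith
      next
        case False
        then have "B \<in> Bstar" using B(1) Bstar_def by blast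
        then show ?thesis using ineq B(2) by fastforce
      qed
    qed
  qed
qed


lemma weighted_core_sum:
  fixes x :: "real ^ 'n::finite"
  assumes mb: "minimal_balanced B"
  shows "(\<Sum>S\<in>B. bal_weight B S * (\<Sum>i\<in>S. x $ i)) = (\<Sum>i\<in>UNIV. x $ i)"
proof -
  have bw: "\<forall>i. sum (bal_weight B) {S\<in>B. i \<in> S} = 1"
    using bal_weight_props[OF mb] unfolding balanced_weights_def by blast
  have "(\<Sum>S\<in>B. bal_weight B S * (\<Sum>i\<in>S. x $ i))
      = (\<Sum>S\<in>B. \<Sum>i\<in>UNIV. if i \<in> S then bal_weight B S * x $ i else 0)"
  proof (rule sum.cong)
    fix S assume "S \<in> B"
    have "(\<Sum>i\<in>UNIV. if i \<in> S then bal_weight B S * x $ i else 0)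
        = (\<Sum>i\<in>{i\<in>UNIV. i \<in> S}. bal_weight B S * x $ i)"
      by (rule sum.inter_filter[symmetric]) simp
    also have "\<dots> = bal_weight B S * (\<Sum>i\<in>S. x $ i)" by (simp add: sum_distrib_left)
    finally show "bal_weight B S * (\<Sum>i\<in>S. x $ i) = (\<Sum>i\<in>UNIV. if i \<in> S then bal_weight B S * x $ i else 0)" by simp
  qed simp
  also have "\<dots> = (\<Sum>i\<in>UNIV. \<Sum>S\<in>B. if i \<in> S then bal_weight B S * x $ i else 0)"
    by (rule sum.swap)
  also have "\<dots> = (\<Sum>i\<in>UNIV. x $ i * sum (bal_weight B) {S\<in>B. i \<in> S})"
  proof (rule sum.cong)
    fix i :: 'n
    have "(\<Sum>S\<in>B. if i \<in> S then bal_weight B S * x $ i else 0)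
        = (\<Sum>S\<in>{S\<in>B. i \<in> S}. bal_weight B S * x $ i)"
      by (rule sum.inter_filter[symmetric]) simp
    also have "\<dots> = x $ i * sum (bal_weight B) {S\<in>B. i \<in> S}"
      by (simp add: sum_distrib_left mult.commute)
    finally show "(\<Sum>S\<in>B. if i \<in> S then bal_weight B S * x $ i else 0) = x $ i * sum (bal_weight B) {S\<in>B. i \<in> S}" .
  qed simp
  also have "\<dots> = (\<Sum>i\<in>UNIV. x $ i)" using bw by simp
  finally show ?thesis .
qed

lemma face_tight:
  fixes v :: "'n::finite set \<Rightarrow> real"
  assumes mb: "minimal_balanced B" and vf: "v \<in> facet B" and xc: "x \<in> core v" and SB: "S \<in> B"
  shows "(\<Sum>i\<in>S. x $ i) = v S"
proof -
  have pos: "\<forall>S\<in>B. bal_weight B S > 0"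
    using bal_weight_props[OF mb] unfolding balanced_weights_def by blast
  have eqf: "(\<Sum>S\<in>B. bal_weight B S * v S) = v UNIV" using vf unfolding facet_def by blast
  have ge: "\<forall>S. (\<Sum>i\<in>S. x $ i) \<ge> v S" and eqN: "(\<Sum>i\<in>UNIV. x $ i) = v UNIV"
    using xc unfolding core_def by blast+
  have "(\<Sum>S\<in>B. bal_weight B S * ((\<Sum>i\<in>S. x $ i) - v S))
     = (\<Sum>S\<in>B. bal_weight B S * (\<Sum>i\<in>S. x $ i)) - (\<Sum>S\<in>B. bal_weight B S * v S)"
    by (simp add: right_diff_distrib sum_subtractf)
  also have "\<dots> = 0" using weighted_core_sum[OF mb, of x] eqf eqN by linarith
  finally have z: "(\<Sum>S\<in>B. bal_weight B S * ((\<Sum>i\<in>S. x $ i) - v S)) = 0" .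
  define f where "f S = bal_weight B S * ((\<Sum>i\<in>S. x $ i) - v S)" for S
  have nn: "0 \<le> f S'" if "S' \<in> B" for S'
  proof -
    have "bal_weight B S' > 0" using pos that by blast
    then have a1: "bal_weight B S' \<ge> 0" by linarith
    have a2: "(\<Sum>i\<in>S'. x $ i) - v S' \<ge> 0" using ge[rule_format, of S'] by linarith
    show ?thesis unfolding f_def by (rule mult_nonneg_nonneg[OF a1 a2])
  qed
  have sf: "sum f B = 0" using z unfolding f_def .
  have "\<forall>S'\<in>B. f S' = 0" using iffD1[OF sum_nonneg_eq_0_iff[OF finite[of B] nn] sf] .
  then have "f S = 0" using SB by blast
  then have m0: "bal_weight B S * ((\<Sum>i\<in>S. x $ i) - v S) = 0" unfolding f_def .
  have "bal_weight B S \<noteq> 0" using pos SB by force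
  then have "(\<Sum>i\<in>S. x $ i) - v S = 0" using m0 by simp
  then show ?thesis by linarith
qed

lemma charvec_univ_span:
  assumes mb: "minimal_balanced (B :: 'n::finite set set)"
  shows "char_vec (UNIV::'n set) \<in> span (char_vec ` B)"
proof -
  have bw: "\<forall>i. sum (bal_weight B) {S\<in>B. i \<in> S} = 1"
    using bal_weight_props[OF mb] unfolding balanced_weights_def by blast
  have "(\<Sum>S\<in>B. bal_weight B S *\<^sub>R char_vec S) = char_vec UNIV"
    unfolding vec_eq_iff
  proof
    fix i
    have "(\<Sum>S\<in>B. bal_weight B S *\<^sub>R char_vec S) $ i = (\<Sum>S\<in>B. if i \<in> S then bal_weight B S else 0)"
      by (auto simp: char_vec_def intro!: sum.cong)
    also have "\<dots> = sum (bal_weight B) {S\<in>B. i \<in> S}" by (simp add: sum.inter_filter)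
    finally show "(\<Sum>S\<in>B. bal_weight B S *\<^sub>R char_vec S) $ i = char_vec UNIV $ i"
      using bw by (simp add: char_vec_def)
  qed
  moreover have "(\<Sum>S\<in>B. bal_weight B S *\<^sub>R char_vec S) \<in> span (char_vec ` B)"
    by (intro span_sum span_mul span_base) auto
  ultimately show ?thesis by simp
qed

theorem theorem18:
  fixes Bs :: "nat \<Rightarrow> 'n::finite set set" and p :: nat
  assumes "p \<ge> 1"
    and "\<forall>k\<in>{1..p}. Bs k \<in> Bstar"
  shows "(\<forall>v \<in> (\<Inter>k\<in>{1..p}. facet (Bs k)). \<exists>x. core v = {x})
     \<longleftrightarrow> dim (char_vec ` (\<Union>k\<in>{1..p}. Bs k)) = CARD('n)"
proof -
  define U where "U = (\<Union>k\<in>{1..p}. Bs k)"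
  have one: "1 \<in> {1..p}" using assms(1) by simp
  have mbk: "minimal_balanced (Bs k)" if "k \<in> {1..p}" for k
    using assms(2) that unfolding Bstar_def by blast
  have dimeq: "dim (char_vec ` U) = CARD('n) \<longleftrightarrow> span (char_vec ` U) = UNIV"
    by (metis DIM_cart DIM_real dim_eq_full mult.right_neutral)
  show ?thesis
  proof
    assume H: "\<forall>v \<in> (\<Inter>k\<in>{1..p}. facet (Bs k)). \<exists>x. core v = {x}"
    show "dim (char_vec ` (\<Union>k\<in>{1..p}. Bs k)) = CARD('n)"
    proof (rule ccontr)
      assume "dim (char_vec ` (\<Union>k\<in>{1..p}. Bs k)) \<noteq> CARD('n)"
      then have "span (char_vec ` U) \<noteq> UNIV" using dimeq U_def by simp
      then obtain a :: "real^'n" where a: "a \<noteq> 0" "\<forall>z\<in>span (char_vec ` U). a \<bullet> z = 0"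
        using span_not_UNIV_orthogonal by blast
      have aS: "(\<Sum>i\<in>S. a $ i) = 0" if "S \<in> U" for S
        using a(2) span_base[of "char_vec S" "char_vec ` U"] that charvec_inner[of a S] by auto
      have "char_vec (UNIV::'n set) \<in> span (char_vec ` U)"
        using charvec_univ_span[OF mbk[OF one]] span_mono[of "char_vec ` Bs 1" "char_vec ` U"] one U_def
        by blast
      then have aN: "(\<Sum>i\<in>UNIV. a $ i) = 0" using a(2) charvec_inner[of a UNIV] by simp
      define v where "v S = min 0 (\<Sum>i\<in>S. a $ i)" for S :: "'n set"
      have vle: "v S \<le> 0" for S by (simp add: v_def)
      have vN: "v UNIV = 0" using aN by (simp add: v_def)
      have vU: "v S = 0" if "S \<in> U" for S using aS[OF that] by (simp add: v_def)
      have vBG: "v \<in> BG"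
        unfolding BG_def is_game_def
      proof (intro CollectI conjI ballI)
        show "v {} = 0" by (simp add: v_def)
      next
        fix B :: "'n set set" assume "B \<in> Bstar"
        then have mb: "minimal_balanced B" unfolding Bstar_def by blast
        have pos: "\<forall>S\<in>B. bal_weight B S > 0"
          using bal_weight_props[OF mb] unfolding balanced_weights_def by blast
        have "(\<Sum>S\<in>B. bal_weight B S * v S) \<le> 0"
          by (rule sum_nonpos) (use pos vle in \<open>simp add: mult_nonneg_nonpos less_imp_le\<close>)
        then show "(\<Sum>S\<in>B. bal_weight B S * v S) \<le> v UNIV" using vN by simp
      qed
      have vF: "v \<in> (\<Inter>k\<in>{1..p}. facet (Bs k))"
      proof -
        have "v \<in> facet (Bs k)" if k: "k \<in> {1..p}" for k
        proof -
          have "\<forall>S\<in>Bs k. bal_weight (Bs k) S * v S = 0"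
          proof
            fix S assume "S \<in> Bs k"
            then have "S \<in> U" using k unfolding U_def by blast
            then show "bal_weight (Bs k) S * v S = 0" using vU by simp
          qed
          then have "(\<Sum>S\<in>Bs k. bal_weight (Bs k) S * v S) = 0"
            by (rule sum.neutral)
          then have s0: "(\<Sum>S\<in>Bs k. bal_weight (Bs k) S * v S) = v UNIV"
            using vN by linarith
          show "v \<in> facet (Bs k)" unfolding facet_def using vBG s0 by blast
        qed
        then show ?thesis by blast
      qed
      obtain x where cx: "core v = {x}" using H vF by blast
      have "0 \<in> core v" unfolding core_def using vle vN by simp
      moreover have "a \<in> core v" unfolding core_def using aN vN by (simp add: v_def)
      ultimately have "0 = x" "a = x" using cx by auto
      then show False using a(1) by simp
    qed
  next
    assume "dim (char_vec ` (\<Union>k\<in>{1..p}. Bs k)) = CARD('n)"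
    then have sp: "span (char_vec ` U) = UNIV" using dimeq U_def by simp
    show "\<forall>v \<in> (\<Inter>k\<in>{1..p}. facet (Bs k)). \<exists>x. core v = {x}"
    proof
      fix v assume vF: "v \<in> (\<Inter>k\<in>{1..p}. facet (Bs k))"
      then have "v \<in> BG" using one unfolding facet_def by blast
      then obtain x where xc: "x \<in> core v" using BG_core_nonempty by blast
      have "y = x" if yc: "y \<in> core v" for y
      proof -
        have orth: "orthogonal (x - y) z" if "z \<in> char_vec ` U" for z
        proof -
          obtain k S where kS: "k \<in> {1..p}" "S \<in> Bs k" "z = char_vec S" using \<open>z \<in> char_vec ` U\<close> U_def by blast
          have vk: "v \<in> facet (Bs k)" using vF kS(1) by blast
          have "(\<Sum>i\<in>S. x $ i) = v S" "(\<Sum>i\<in>S. y $ i) = v S"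
            using face_tight[OF mbk[OF kS(1)] vk xc kS(2)] face_tight[OF mbk[OF kS(1)] vk yc kS(2)] by auto
          then show ?thesis unfolding orthogonal_def kS(3) charvec_inner
            by (simp add: sum_subtractf)
        qed
        have "orthogonal (x - y) (x - y)"
          by (rule orthogonal_to_span) (use sp orth in auto)
        then show "y = x" unfolding orthogonal_def by simp
      qed
      then show "\<exists>x. core v = {x}" using xc by blast
    qed
  qed
qed

end
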